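(* Let $P(s,h)=\{p_1,\dots,p_m\}$ and $P(h,t)=\{p'_1,\dots,p'_n\}$ be skyline path sets with $p_i=(w_i,c_i)$, $p'_j=(w'_j,c'_j)$, each sorted in weight-increasing order, let $p_i^j=(w_i+w'_j,c_i+c'_j)$ and $P_c=\{p_k^l:1\le k\le m,1\le l\le n\}$. Fix $i,j$ and let $P_3=\{p_k^l: k<i,\ l>j\}$ and $P_4=\{p_k^l: k>i,\ l<j\}$. Then $p_i^j$ is a skyline path of $P_c$ (not dominated by any path of $P_c$) if and only if it is not dominated by any path in $P_3\cup P_4$.
   Context: A path with value $(w,c)$ dominates a path with value $(w',c')$ if $w\le w'$, $c\le c'$, and at least one inequality is strict. A skyline path set is a set of paths no one of which dominates another (so, in two dimensions, when sorted by increasing weight the costs are non-increasing). Concatenation adds weights and costs. *)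

theory Defs
  imports Complex_Main
begin

text \<open>A path is represented by its value (weight, cost).\<close>
type_synonym pval = "real \<times> real"

definition dominates :: "pval \<Rightarrow> pval \<Rightarrow> bool" where
  "dominates p q \<longleftrightarrow> fst p \<le> fst q \<and> snd p \<le> snd q \<and> (fst p < fst q \<or> snd p < snd q)"

definition skyline :: "pval set \<Rightarrow> bool" where
  "skyline S \<longleftrightarrow> (\<forall>p\<in>S. \<forall>q\<in>S. \<not> dominates p q)"

definition concat_path :: "pval \<Rightarrow> pval \<Rightarrow> pval" where
  "concat_path p q = (fst p + fst q, snd p + snd q)"

end

theory Submission
  imports Defs
begin

lemma sky_mono:
  assumes "skyline (set ps)" "sorted (map fst ps)" "k \<le> i" "i < length ps"
  shows "fst (ps!k) \<le> fst (ps!i) \<and> snd (ps!i) \<le> snd (ps!k) \<and>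
    (snd (ps!k) \<le> snd (ps!i) \<longrightarrow> ps!k = ps!i) \<and> (fst (ps!i) \<le> fst (ps!k) \<longrightarrow> ps!k = ps!i)"
proof -
  have f: "fst (ps!k) \<le> fst (ps!i)" using assms(2-4) by (simp add: sorted_iff_nth_mono)
  have "\<not> dominates (ps!k) (ps!i)" "\<not> dominates (ps!i) (ps!k)" using assms(1,3,4) unfolding skyline_def by auto
  with f show ?thesis unfolding dominates_def by (auto simp: prod_eq_iff)
qed

theorem mainTheorem4:
  fixes ps qs :: "pval list" and i j :: nat
  assumes "skyline (set ps)" and "skyline (set qs)"
    and "sorted (map fst ps)" and "sorted (map fst qs)"
    and "i < length ps" and "j < length qs"
  shows "(\<forall>r \<in> {concat_path (ps ! k) (qs ! l) | k l. k < length ps \<and> l < length qs}.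
            \<not> dominates r (concat_path (ps ! i) (qs ! j)))
     \<longleftrightarrow> (\<forall>r \<in> {concat_path (ps ! k) (qs ! l) | k l. k < i \<and> j < l \<and> l < length qs}
                \<union> {concat_path (ps ! k) (qs ! l) | k l. i < k \<and> k < length ps \<and> l < j}.
            \<not> dominates r (concat_path (ps ! i) (qs ! j)))" (is "?L \<longleftrightarrow> ?R")
proof
  assume L: ?L
  show ?R
  proof (intro ballI)
    fix r assume "r \<in> {concat_path (ps ! k) (qs ! l) | k l. k < i \<and> j < l \<and> l < length qs}
                \<union> {concat_path (ps ! k) (qs ! l) | k l. i < k \<and> k < length ps \<and> l < j}"
    then have "r \<in> {concat_path (ps ! k) (qs ! l) | k l. k < length ps \<and> l < length qs}"
      using assms(5,6) by (auto intro: less_trans)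
    then show "\<not> dominates r (concat_path (ps ! i) (qs ! j))" using L by blast
  qed
next
  assume R: ?R
  show ?L
  proof (intro ballI notI)
    fix r assume "r \<in> {concat_path (ps ! k) (qs ! l) | k l. k < length ps \<and> l < length qs}"
      and d: "dominates r (concat_path (ps ! i) (qs ! j))"
    then obtain k l where r: "r = concat_path (ps ! k) (qs ! l)" and kl: "k < length ps" "l < length qs" by auto
    consider "k \<le> i" "l \<le> j" | "i \<le> k" "j \<le> l" | "k < i" "j < l" | "i < k" "l < j" by linarith
    then show False
    proof cases
      case 1
      have a: "fst (ps!k) \<le> fst (ps!i) \<and> snd (ps!i) \<le> snd (ps!k) \<and> (snd (ps!k) \<le> snd (ps!i) \<longrightarrow> ps!k = ps!i) \<and> (fst (ps!i) \<le> fst (ps!k) \<longrightarrow> ps!k = ps!i)"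
        using sky_mono[OF assms(1,3) 1(1) assms(5)] .
      have b: "fst (qs!l) \<le> fst (qs!j) \<and> snd (qs!j) \<le> snd (qs!l) \<and> (snd (qs!l) \<le> snd (qs!j) \<longrightarrow> qs!l = qs!j) \<and> (fst (qs!j) \<le> fst (qs!l) \<longrightarrow> qs!l = qs!j)"
        using sky_mono[OF assms(2,4) 1(2) assms(6)] .
      show False using a b d r unfolding dominates_def concat_path_def by (auto simp: prod_eq_iff)
    next
      case 2
      have a: "fst (ps!i) \<le> fst (ps!k) \<and> snd (ps!k) \<le> snd (ps!i) \<and> (snd (ps!i) \<le> snd (ps!k) \<longrightarrow> ps!i = ps!k) \<and> (fst (ps!k) \<le> fst (ps!i) \<longrightarrow> ps!i = ps!k)"
        using sky_mono[OF assms(1,3) 2(1) kl(1)] .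
      have b: "fst (qs!j) \<le> fst (qs!l) \<and> snd (qs!l) \<le> snd (qs!j) \<and> (snd (qs!j) \<le> snd (qs!l) \<longrightarrow> qs!j = qs!l) \<and> (fst (qs!l) \<le> fst (qs!j) \<longrightarrow> qs!j = qs!l)"
        using sky_mono[OF assms(2,4) 2(2) kl(2)] .
      show False using a b d r unfolding dominates_def concat_path_def by (auto simp: prod_eq_iff)
    next
      case 3 then show False using R d r kl by blast
    next
      case 4 then show False using R d r kl by blast
    qed
  qed
qed

end
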